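(* Let $G$ be a graph with $n$ vertices and maximum degree $\Delta$, and let $1\leq k\leq n$. (i) If $0\leq \alpha \leq \frac{1}{2}$, then $S_k(A_{\alpha}(G))\geq (1-\alpha) S_k(Q(G))+(2\alpha-1)k\Delta$. (ii) If $\frac{1}{2}\leq \alpha \leq 1$, then $S_k(A_{\alpha}(G))\geq \alpha S_k(Q(G))+(1-2\alpha)S_k(A(G))$. If $G$ is a regular graph, then equality holds in both inequalities.
   Context: All graphs are simple and undirected. $A(G)$ is the adjacency matrix, $D(G)$ the diagonal degree matrix, $Q(G)=D(G)+A(G)$ the signless Laplacian matrix, and $A_{\alpha}(G)=\alpha D(G)+(1-\alpha)A(G)$. For a real symmetric matrix $M$ with eigenvalues $\lambda_1(M)\geq\cdots\geq\lambda_n(M)$, $S_k(M)=\sum_{i=1}^k\lambda_i(M)$. *)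

theory Defs
  imports "Jordan_Normal_Form.Char_Poly"
begin

definition simple_graph :: "nat \<Rightarrow> (nat \<Rightarrow> nat \<Rightarrow> bool) \<Rightarrow> bool" where
  "simple_graph n E \<longleftrightarrow> (\<forall>i<n. \<forall>j<n. E i j \<longleftrightarrow> E j i) \<and> (\<forall>i<n. \<not> E i i)"

definition degree :: "nat \<Rightarrow> (nat \<Rightarrow> nat \<Rightarrow> bool) \<Rightarrow> nat \<Rightarrow> nat" where
  "degree n E i = card {j. j < n \<and> E i j}"

definition max_degree :: "nat \<Rightarrow> (nat \<Rightarrow> nat \<Rightarrow> bool) \<Rightarrow> nat" where
  "max_degree n E = Max (degree n E ` {..<n})"

definition regular :: "nat \<Rightarrow> (nat \<Rightarrow> nat \<Rightarrow> bool) \<Rightarrow> bool" where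
  "regular n E \<longleftrightarrow> (\<exists>r. \<forall>i<n. degree n E i = r)"

definition adj_mat :: "nat \<Rightarrow> (nat \<Rightarrow> nat \<Rightarrow> bool) \<Rightarrow> real mat" where
  "adj_mat n E = mat n n (\<lambda>(i,j). if E i j then 1 else 0)"

definition deg_mat :: "nat \<Rightarrow> (nat \<Rightarrow> nat \<Rightarrow> bool) \<Rightarrow> real mat" where
  "deg_mat n E = mat n n (\<lambda>(i,j). if i = j then real (degree n E i) else 0)"

definition signless_laplacian :: "nat \<Rightarrow> (nat \<Rightarrow> nat \<Rightarrow> bool) \<Rightarrow> real mat" where
  "signless_laplacian n E = deg_mat n E + adj_mat n E"

definition A_alpha :: "real \<Rightarrow> nat \<Rightarrow> (nat \<Rightarrow> nat \<Rightarrow> bool) \<Rightarrow> real mat" where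
  "A_alpha \<alpha> n E = \<alpha> \<cdot>\<^sub>m deg_mat n E + (1 - \<alpha>) \<cdot>\<^sub>m adj_mat n E"

(* Eigenvalues (with multiplicity) of a real matrix, as the real roots of its characteristic
   polynomial, listed in non-increasing order. For a real symmetric matrix these are all
   n eigenvalues lambda_1 >= ... >= lambda_n. *)
definition eigenvalues_desc :: "real mat \<Rightarrow> real list" where
  "eigenvalues_desc M = rev (sorted_list_of_multiset (proots (char_poly M)))"

definition S :: "nat \<Rightarrow> real mat \<Rightarrow> real" where
  "S k M = sum_list (take k (eigenvalues_desc M))"

end

theory Submission
  imports Defs
begin

lemma real_sym_eig_real:
  fixes M :: "real mat"
  assumes M: "M \<in> carrier_mat n n" and sym: "transpose_mat M = M"
  and ev: "eigenvalue (map_mat complex_of_real M) a"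
  shows "cnj a = a"
proof -
  let ?Mc = "map_mat complex_of_real M"
  have Mc: "?Mc \<in> carrier_mat n n" using M by auto
  from ev obtain v where evv: "eigenvector ?Mc v a" unfolding eigenvalue_def by auto
  hence v: "v \<in> carrier_vec n" and v0: "v \<noteq> 0\<^sub>v n" and eq: "?Mc *\<^sub>v v = a \<cdot>\<^sub>v v"
    using M unfolding eigenvector_def by auto
  have symij: "M $$ (i,j) = M $$ (j,i)" if "i < n" "j < n" for i j
    using arg_cong[OF sym, of "\<lambda>A. A $$ (i,j)"] that M by auto
  have rowi: "(\<Sum>j<n. of_real (M $$ (i,j)) * v $ j) = a * v $ i" if i: "i < n" for i
  proof -
    have "(?Mc *\<^sub>v v) $ i = a * v $ i" using eq i v by simp
    moreover have "(?Mc *\<^sub>v v) $ i = (\<Sum>j<n. of_real (M $$ (i,j)) * v $ j)"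
      using i M v by (auto simp: scalar_prod_def lessThan_atLeast0 intro!: sum.cong)
    ultimately show ?thesis by simp
  qed
  define s where "s = (\<Sum>i<n. \<Sum>j<n. cnj (v $ i) * of_real (M $$ (i,j)) * v $ j)"
  define N where "N = (\<Sum>i<n. cnj (v $ i) * v $ i)"
  have s1: "s = a * N"
  proof -
    have "s = (\<Sum>i<n. cnj (v $ i) * (\<Sum>j<n. of_real (M $$ (i,j)) * v $ j))"
      unfolding s_def by (simp add: sum_distrib_left mult.assoc)
    also have "\<dots> = (\<Sum>i<n. cnj (v $ i) * (a * v $ i))" using rowi by simp
    also have "\<dots> = a * N" unfolding N_def by (simp add: sum_distrib_left algebra_simps)
    finally show ?thesis .
  qed
  have s2: "cnj s = s"
  proof -
    have "cnj s = (\<Sum>i<n. \<Sum>j<n. v $ i * of_real (M $$ (i,j)) * cnj (v $ j))"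
      unfolding s_def by simp
    also have "\<dots> = (\<Sum>j<n. \<Sum>i<n. v $ i * of_real (M $$ (i,j)) * cnj (v $ j))"
      by (rule sum.swap)
    also have "\<dots> = s" unfolding s_def
      by (intro sum.cong refl, simp add: symij algebra_simps)
    finally show ?thesis .
  qed
  have Nreal: "N = of_real (\<Sum>i<n. (cmod (v $ i))^2)"
    unfolding N_def of_real_sum by (intro sum.cong refl, simp add: complex_norm_square mult.commute del: of_real_power)
  obtain i where i: "i < n" and vi: "v $ i \<noteq> 0" using v v0 by (metis eq_vecI carrier_vecD index_zero_vec)
  have "(\<Sum>i<n. (cmod (v $ i))^2) > 0"
    by (rule sum_pos2[of _ i], insert i vi, auto)
  hence N0: "N \<noteq> 0" unfolding Nreal of_real_eq_0_iff by linarith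
  have cN: "cnj N = N" unfolding Nreal by (rule complex_cnj_complex_of_real)
  from s1 s2 have "cnj a * N = a * N" by (metis complex_cnj_mult cN)
  with N0 show ?thesis by simp
qed

lemma real_sym_split:
  fixes M :: "real mat"
  assumes M: "M \<in> carrier_mat n n" and sym: "transpose_mat M = M"
  shows "\<exists>es. char_poly M = (\<Prod>e\<leftarrow>es. [:-e,1:]) \<and> length es = n"
proof -
  let ?Mc = "map_mat complex_of_real M"
  have Mc: "?Mc \<in> carrier_mat n n" using M by auto
  from char_poly_factorized[OF Mc] obtain as where
    cp: "char_poly ?Mc = (\<Prod>a\<leftarrow>as. [:- a, 1:])" and len: "length as = n" by auto
  have real: "cnj a = a" if a: "a \<in> set as" for a
  proof -
    have "poly (char_poly ?Mc) a = 0" unfolding cp using linear_poly_root[OF a] .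
    hence "eigenvalue ?Mc a" using eigenvalue_root_char_poly[OF Mc] by simp
    thus ?thesis by (rule real_sym_eig_real[OF M sym])
  qed
  define es where "es = map Re as"
  have as: "as = map complex_of_real es" unfolding es_def
  proof -
    have "map complex_of_real (map Re as) = map id as"
      unfolding map_map by (rule map_cong, insert real, auto simp: complex_eq_iff)
    thus "as = map complex_of_real (map Re as)" by simp
  qed
  interpret mh: map_poly_inj_comm_ring_hom complex_of_real ..
  have "map_poly complex_of_real (char_poly M) = char_poly ?Mc"
    by (rule of_real_hom.char_poly_hom[OF M, symmetric])
  also have "\<dots> = map_poly complex_of_real (\<Prod>e\<leftarrow>es. [:-e,1:])"
    unfolding cp as mh.hom_prod_list by (simp add: o_def)
  finally have "char_poly M = (\<Prod>e\<leftarrow>es. [:-e,1:])" by simp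
  moreover have "length es = n" using len unfolding es_def by simp
  ultimately show ?thesis by blast
qed

lemma householder:
  fixes u :: "real vec"
  assumes u: "u \<in> carrier_vec n" and uu: "u \<bullet> u = 1" and n: "0 < n" and u0: "u $ 0 \<ge> 0"
  shows "\<exists>H. H \<in> carrier_mat n n \<and> transpose_mat H = H \<and> H * H = 1\<^sub>m n \<and> col H 0 = - u"
proof -
  define w where "w = (\<lambda>i. u $ i + (if i = 0 then 1 else 0::real))"
  define c where "c = 1 / (1 + u $ 0)"
  have c0: "c * (1 + u $ 0) = 1" unfolding c_def using u0 by auto
  define H where "H = mat n n (\<lambda>(i,j). (if i = j then 1 else 0) - c * w i * w j)"
  have H: "H \<in> carrier_mat n n" unfolding H_def by auto
  have ww: "(\<Sum>l<n. w l * w l) = 2 * (1 + u $ 0)"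
  proof -
    have "(\<Sum>l<n. w l * w l) = (\<Sum>l<n. u $ l * u $ l + (if l = 0 then 2 * u $ l + 1 else 0))"
      unfolding w_def by (intro sum.cong refl, auto simp: algebra_simps)
    also have "\<dots> = (\<Sum>l<n. u $ l * u $ l) + (2 * u $ 0 + 1)"
      using n by (simp add: sum.distrib)
    also have "(\<Sum>l<n. u $ l * u $ l) = 1" using uu u
      by (auto simp: scalar_prod_def lessThan_atLeast0)
    finally show ?thesis by simp
  qed
  have HT: "transpose_mat H = H" unfolding H_def by (rule eq_matI, auto)
  have HH: "H * H = 1\<^sub>m n"
  proof (rule eq_matI)
    fix i j assume i: "i < dim_row (1\<^sub>m n)" and j: "j < dim_col (1\<^sub>m n)"
    hence i: "i < n" and j: "j < n" by auto
    have "(H * H) $$ (i,j) = (\<Sum>l<n. ((if i = l then 1 else 0) - c * w i * w l) * ((if l = j then 1 else 0) - c * w l * w j))"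
      using i j H unfolding H_def by (auto simp: scalar_prod_def lessThan_atLeast0 intro!: sum.cong)
    also have "\<dots> = (\<Sum>l<n. (if l = i then (if i = j then 1 else 0) else 0))
        - (\<Sum>l<n. (if l = i then c * w i * w j else 0)) - (\<Sum>l<n. (if l = j then c * w i * w j else 0))
        + c * c * w i * w j * (\<Sum>l<n. w l * w l)"
    proof -
      have "(\<Sum>l<n. ((if i = l then 1 else 0) - c * w i * w l) * ((if l = j then 1 else 0) - c * w l * w j))
        = (\<Sum>l<n. (if l = i then (if i = j then 1 else 0) else 0)
        - (if l = i then c * w i * w j else 0) - (if l = j then c * w i * w j else 0)
        + c * c * w i * w j * (w l * w l))"
        by (intro sum.cong refl, auto simp: algebra_simps)
      thus ?thesis by (simp only: sum.distrib sum_subtractf sum_distrib_left)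
    qed
    also have "\<dots> = (if i = j then 1 else 0) - 2 * c * w i * w j + c * c * w i * w j * (\<Sum>l<n. w l * w l)"
      using i j by simp
    also have "\<dots> = (if i = j then 1 else 0) - 2 * c * w i * w j + 2 * c * w i * w j * (c * (1 + u $ 0))"
      unfolding ww by (simp add: algebra_simps)
    also have "\<dots> = (if i = j then 1 else 0)" unfolding c0 by simp
    finally show "(H * H) $$ (i,j) = 1\<^sub>m n $$ (i,j)" using i j by simp
  qed (insert H, auto)
  have cH: "col H 0 = - u"
  proof (rule eq_vecI)
    fix i assume "i < dim_vec (- u)"
    hence i: "i < n" using u by auto
    have cw: "c * w 0 = 1" unfolding w_def using c0 by (simp add: algebra_simps)
    have "col H 0 $ i = (if i = 0 then 1 else 0) - (c * w 0) * w i" using i n unfolding H_def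
      by (simp add: algebra_simps)
    hence "col H 0 $ i = (if i = 0 then 1 else 0) - w i" unfolding cw by simp
    thus "col H 0 $ i = (- u) $ i" using i u unfolding w_def by auto
  qed (insert H u, auto)
  show ?thesis using H HT HH cH by blast
qed

lemma mat_vec_uminus_right:
  fixes A :: "real mat"
  assumes "A \<in> carrier_mat nr nc" "v \<in> carrier_vec nc"
  shows "A *\<^sub>v (- v) = - (A *\<^sub>v v)"
  using assms by (intro eq_vecI, auto)

definition dmat :: "real list \<Rightarrow> real mat" where
  "dmat d = mat (length d) (length d) (\<lambda>(i,j). if i = j then d ! i else 0)"

lemma unit_eigvec:
  fixes M :: "real mat"
  assumes M: "M \<in> carrier_mat n n" and ev: "eigenvalue M e"
  shows "\<exists>u. u \<in> carrier_vec n \<and> u \<bullet> u = 1 \<and> 0 < n \<and> u $ 0 \<ge> 0 \<and> M *\<^sub>v u = e \<cdot>\<^sub>v u"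
proof -
  define v where "v = find_eigenvector M e"
  from find_eigenvector[OF M ev] have "eigenvector M v e" unfolding v_def .
  hence v: "v \<in> carrier_vec n" and v0: "v \<noteq> 0\<^sub>v n" and Mv: "M *\<^sub>v v = e \<cdot>\<^sub>v v"
    using M unfolding eigenvector_def by auto
  obtain i where i: "i < n" and vi: "v $ i \<noteq> 0" using v v0 by (metis eq_vecI carrier_vecD index_zero_vec)
  have n: "0 < n" using i by auto
  have vv: "v \<bullet> v = (\<Sum>l\<in>{0..<n}. v $ l * v $ l)" using v by (simp add: scalar_prod_def)
  have vvpos: "v \<bullet> v > 0" unfolding vv
    by (rule sum_pos2[of _ i], insert i vi, auto simp: zero_less_mult_iff)
  define s where "s = (if v $ 0 \<ge> 0 then 1 else -1) / sqrt (v \<bullet> v)"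
  define u where "u = s \<cdot>\<^sub>v v"
  have u: "u \<in> carrier_vec n" unfolding u_def using v by auto
  have "u \<bullet> u = s * s * (v \<bullet> v)" unfolding u_def using v by simp
  also have "s * s = 1 / (v \<bullet> v)" unfolding s_def using vvpos
    by (auto simp: field_simps)
  finally have uu: "u \<bullet> u = 1" using vvpos by simp
  have u0: "u $ 0 \<ge> 0" unfolding u_def s_def using n v vvpos
    by (auto simp: divide_simps)
  have "M *\<^sub>v u = e \<cdot>\<^sub>v u" unfolding u_def mult_mat_vec[OF M v] Mv using v
    by (simp add: smult_smult_assoc mult.commute)
  thus ?thesis using u uu n u0 by blast
qed

lemma spectral_es:
  fixes M :: "real mat"
  assumes "M \<in> carrier_mat n n" "transpose_mat M = M" "char_poly M = (\<Prod>e\<leftarrow>es. [:-e,1:])"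
  shows "\<exists>P. P \<in> carrier_mat n n \<and> transpose_mat P * P = 1\<^sub>m n \<and> transpose_mat P * M * P = dmat es"
  using assms
proof (induct es arbitrary: n M)
  case Nil
  then have M: "M \<in> carrier_mat n n" by auto
  from degree_monic_char_poly[OF M] Nil(3) have n0: "n = 0" by simp
  show ?case by (rule exI[of _ "1\<^sub>m n"], insert M n0, auto intro!: eq_matI simp: dmat_def)
next
  case (Cons e es n M)
  have M: "M \<in> carrier_mat n n" and sym: "transpose_mat M = M" using Cons by auto
  have cp: "char_poly M = [:-e,1:] * (\<Prod>e\<leftarrow>es. [:-e,1:])" using Cons(4) by simp
  have ev: "eigenvalue M e" unfolding eigenvalue_root_char_poly[OF M] cp by simp
  from unit_eigvec[OF M ev] obtain u where u: "u \<in> carrier_vec n" and uu: "u \<bullet> u = 1"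
    and n: "0 < n" and u0: "u $ 0 \<ge> 0" and Mu: "M *\<^sub>v u = e \<cdot>\<^sub>v u" by blast
  from householder[OF u uu n u0] obtain H where H: "H \<in> carrier_mat n n"
    and HT: "transpose_mat H = H" and HH: "H * H = 1\<^sub>m n" and cH: "col H 0 = - u" by blast
  define A' where "A' = H * M * H"
  have A': "A' \<in> carrier_mat n n" unfolding A'_def using H M by auto
  have A'T: "transpose_mat A' = A'"
  proof -
    have "transpose_mat A' = transpose_mat H * transpose_mat (H * M)"
      unfolding A'_def by (rule transpose_mult[OF _ H], insert H M, auto)
    also have "transpose_mat (H * M) = transpose_mat M * transpose_mat H" by (rule transpose_mult[OF H M])
    finally show ?thesis unfolding A'_def HT sym using H M by simp
  qed
  have Hu: "H *\<^sub>v u = - unit_vec n 0"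
  proof -
    have "H *\<^sub>v col H 0 = col (H * H) 0" using col_mult2[OF H H n] by simp
    also have "\<dots> = unit_vec n 0" unfolding HH using n by simp
    finally have "- (H *\<^sub>v u) = unit_vec n 0" unfolding cH using H u by (simp add: mat_vec_uminus_right)
    hence "- (- (H *\<^sub>v u)) = - unit_vec n 0" by simp
    thus ?thesis by simp
  qed
  have colA': "col A' 0 = e \<cdot>\<^sub>v unit_vec n 0"
  proof -
    have "col A' 0 = (H * M) *\<^sub>v col H 0" unfolding A'_def
      by (rule col_mult2[OF _ H n], insert H M, auto)
    also have "\<dots> = H *\<^sub>v (M *\<^sub>v (- u))" unfolding cH using H M u by simp
    also have "M *\<^sub>v (- u) = - (e \<cdot>\<^sub>v u)" using M u Mu by (simp add: mat_vec_uminus_right)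
    also have "H *\<^sub>v (- (e \<cdot>\<^sub>v u)) = - (e \<cdot>\<^sub>v (H *\<^sub>v u))" using H u mult_mat_vec[OF H u]
      by (simp add: mat_vec_uminus_right[OF H])
    also have "\<dots> = e \<cdot>\<^sub>v unit_vec n 0" unfolding Hu by (rule eq_vecI, auto)
    finally show ?thesis .
  qed
  have A'0: "A' $$ (i,0) = (if i = 0 then e else 0)" if i: "i < n" for i
    using arg_cong[OF colA', of "\<lambda>v. v $ i"] i n A' by auto
  have A'0': "A' $$ (0,j) = (if j = 0 then e else 0)" if j: "j < n" for j
    using arg_cong[OF A'T, of "\<lambda>A. A $$ (j,0)"] A'0[OF j] j n A' by auto
  define m where "m = n - 1"
  have nm: "n = Suc m" unfolding m_def using n by simp
  define A3 where "A3 = mat m m (\<lambda>(i,j). A' $$ (Suc i, Suc j))"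
  define A1 where "A1 = mat 1 1 (\<lambda>_. e)"
  have A3: "A3 \<in> carrier_mat m m" unfolding A3_def by simp
  have A1: "A1 \<in> carrier_mat 1 1" unfolding A1_def by simp
  have blk: "A' = four_block_mat A1 (0\<^sub>m 1 m) (0\<^sub>m m 1) A3"
  proof (rule eq_matI)
    fix i j assume i: "i < dim_row (four_block_mat A1 (0\<^sub>m 1 m) (0\<^sub>m m 1) A3)"
      and j: "j < dim_col (four_block_mat A1 (0\<^sub>m 1 m) (0\<^sub>m m 1) A3)"
    hence i: "i < n" and j: "j < n" using A1 A3 nm by auto
    show "A' $$ (i, j) = four_block_mat A1 (0\<^sub>m 1 m) (0\<^sub>m m 1) A3 $$ (i, j)"
    proof (cases "i = 0")
      case True thus ?thesis using A'0'[OF j] j A1 A3 nm by (auto simp: A1_def)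
    next
      case False note i0 = this
      show ?thesis
      proof (cases "j = 0")
        case True thus ?thesis using A'0[OF i] i i0 A1 A3 nm by (auto simp: A1_def)
      next
        case False thus ?thesis using i j i0 A1 A3 nm by (auto simp: A3_def)
      qed
    qed
  qed (insert A' A1 A3 nm, auto)
  have A3T: "transpose_mat A3 = A3"
  proof (rule eq_matI)
    fix i j assume "i < dim_row A3" "j < dim_col A3"
    hence ij: "i < m" "j < m" using A3 by auto
    show "transpose_mat A3 $$ (i, j) = A3 $$ (i, j)"
      using arg_cong[OF A'T, of "\<lambda>A. A $$ (Suc i, Suc j)"] A' nm ij by (auto simp: A3_def)
  qed (insert A3, auto)
  have "similar_mat_wit A' M H H" unfolding similar_mat_wit_def Let_def A'_def
    using H M HH by auto
  hence "char_poly A' = char_poly M" by (intro char_poly_similar, auto simp: similar_mat_def)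
  also have "char_poly A' = char_poly A1 * char_poly A3" unfolding blk
    by (rule char_poly_four_block_zeros_col[OF A1 _ A3], auto)
  also have "char_poly A1 = [: -e,1 :]"
    by (simp add: A1_def char_poly_defs det_def sign_def)
  finally have cp3: "char_poly A3 = (\<Prod> e \<leftarrow> es. [:- e, 1:])" unfolding cp
    by (metis mult_cancel_left pCons_eq_0_iff zero_neq_one)
  from Cons(1)[OF A3 A3T cp3] obtain P3 where P3: "P3 \<in> carrier_mat m m"
    and P3P3: "transpose_mat P3 * P3 = 1\<^sub>m m" and P3A3: "transpose_mat P3 * A3 * P3 = dmat es" by blast
  have les: "length es = m" using arg_cong[OF P3A3, of dim_row] P3 by (simp add: dmat_def)
  define B where "B = four_block_mat (1\<^sub>m 1) (0\<^sub>m 1 m) (0\<^sub>m m 1) P3"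
  define BT where "BT = four_block_mat (1\<^sub>m 1) (0\<^sub>m 1 m) (0\<^sub>m m 1) (transpose_mat P3)"
  have B: "B \<in> carrier_mat n n" unfolding B_def nm using P3 by auto
  have BT: "BT \<in> carrier_mat n n" unfolding BT_def nm using P3 by auto
  have BTB: "transpose_mat B = BT" unfolding B_def BT_def
    by (subst transpose_four_block_mat, insert P3, auto)
  define P where "P = H * B"
  have P: "P \<in> carrier_mat n n" unfolding P_def using H B by auto
  have PT: "transpose_mat P = BT * H" unfolding P_def
    by (subst transpose_mult[OF H B], simp add: BTB HT)
  have HHB: "H * (H * B) = B" using assoc_mult_mat[OF H H B, symmetric] HH B by simp
  have "transpose_mat P * P = (BT * H) * (H * B)" unfolding PT by (simp add: P_def)
  also have "\<dots> = BT * (H * (H * B))" using assoc_mult_mat[OF BT H, of "H * B" n] H B by simp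
  also have "\<dots> = BT * B" unfolding HHB ..
  also have "\<dots> = 1\<^sub>m n" unfolding BT_def B_def nm
    by (subst mult_four_block_mat, insert P3 P3P3, auto)
  finally have PP: "transpose_mat P * P = 1\<^sub>m n" .
  have "transpose_mat P * M * P = (BT * H) * M * (H * B)" unfolding PT by (simp add: P_def)
  also have "\<dots> = BT * (H * M) * (H * B)" using assoc_mult_mat[OF BT H M] by simp
  also have "\<dots> = BT * ((H * M) * (H * B))" using assoc_mult_mat[OF BT _ _, of "H * M" n "H * B" n] H M B by simp
  also have "(H * M) * (H * B) = A' * B" unfolding A'_def using assoc_mult_mat[OF _ H B, of "H * M" n] H M by simp
  also have "BT * (A' * B) = BT * A' * B" using assoc_mult_mat[OF BT A' B] by simp
  also have "\<dots> = four_block_mat A1 (0\<^sub>m 1 m) (0\<^sub>m m 1) (transpose_mat P3 * A3 * P3)"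
  proof -
    have P3T: "transpose_mat P3 \<in> carrier_mat m m" using P3 by simp
    have "BT * A' = four_block_mat A1 (0\<^sub>m 1 m) (0\<^sub>m m 1) (transpose_mat P3 * A3)"
      unfolding blk BT_def
      by (subst mult_four_block_mat[OF one_carrier_mat zero_carrier_mat zero_carrier_mat P3T
           A1 zero_carrier_mat zero_carrier_mat A3], insert A1 A3 P3T, simp)
    also have "\<dots> * B = four_block_mat A1 (0\<^sub>m 1 m) (0\<^sub>m m 1) (transpose_mat P3 * A3 * P3)"
      unfolding B_def
      by (subst mult_four_block_mat[OF A1 zero_carrier_mat zero_carrier_mat mult_carrier_mat[OF P3T A3]
           one_carrier_mat zero_carrier_mat zero_carrier_mat P3], insert A1 A3 P3T P3, simp)
    finally show ?thesis .
  qed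
  also have "\<dots> = dmat (e # es)" unfolding P3A3
    by (rule eq_matI, auto simp: dmat_def A1_def les)
  finally show ?case using P PP by blast
qed

lemma prod_list_perm:
  assumes "mset xs = mset ys"
  shows "prod_list (map (f :: 'a \<Rightarrow> 'b :: comm_monoid_mult) xs) = prod_list (map f ys)"
proof -
  have "prod_list (map f xs) = prod_mset (image_mset f (mset xs))"
    by (metis prod_mset_prod_list mset_map)
  also have "\<dots> = prod_list (map f ys)" unfolding assms
    by (metis prod_mset_prod_list mset_map)
  finally show ?thesis .
qed

lemma spectral_desc:
  fixes M :: "real mat"
  assumes M: "M \<in> carrier_mat n n" and sym: "transpose_mat M = M"
  shows "\<exists>P. P \<in> carrier_mat n n \<and> transpose_mat P * P = 1\<^sub>m n
     \<and> transpose_mat P * M * P = dmat (eigenvalues_desc M)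
     \<and> length (eigenvalues_desc M) = n \<and> sorted_wrt (\<ge>) (eigenvalues_desc M)"
proof -
  from real_sym_split[OF M sym] obtain es where cp: "char_poly M = (\<Prod>e\<leftarrow>es. [:-e,1:])"
    and len: "length es = n" by blast
  have pr0: "proots (\<Prod>e\<leftarrow>xs. [:-e,1:]) = mset xs" for xs :: "real list"
  proof (induct xs)
    case (Cons a xs)
    have nz: "(\<Prod>e\<leftarrow>xs. [:-e,1:]) \<noteq> (0 :: real poly)" by (auto simp: prod_list_zero_iff)
    have "proots (\<Prod>e\<leftarrow>a # xs. [:-e,1:]) = proots [:-a,1:] + proots (\<Prod>e\<leftarrow>xs. [:-e,1:])"
      by (simp only: list.map prod_list.Cons, rule proots_mult[OF _ nz], simp)
    also have "proots [:-a,1:] = {#a#}" using proots_linear_factor[of "-a"] by simp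
    finally show ?case using Cons by simp
  qed simp
  have pr: "proots (char_poly M) = mset es" unfolding cp by (rule pr0)
  have ed: "eigenvalues_desc M = rev (sort es)" unfolding eigenvalues_desc_def pr by simp
  have mset: "mset (eigenvalues_desc M) = mset es" unfolding ed by simp
  have cp2: "char_poly M = (\<Prod>e\<leftarrow>eigenvalues_desc M. [:-e,1:])"
    unfolding cp by (rule prod_list_perm[OF mset[symmetric]])
  from spectral_es[OF M sym cp2] obtain P where "P \<in> carrier_mat n n \<and> transpose_mat P * P = 1\<^sub>m n
     \<and> transpose_mat P * M * P = dmat (eigenvalues_desc M)" by blast
  moreover have "length (eigenvalues_desc M) = n" unfolding ed using len by simp
  moreover have "sorted_wrt (\<ge>) (eigenvalues_desc M)" unfolding ed sorted_wrt_rev by simp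
  ultimately show ?thesis by blast
qed

lemma rearr:
  fixes lam w :: "nat \<Rightarrow> real"
  assumes mono: "\<And>i j. i \<le> j \<Longrightarrow> j < n \<Longrightarrow> lam j \<le> lam i"
    and w0: "\<And>i. i < n \<Longrightarrow> 0 \<le> w i" and w1: "\<And>i. i < n \<Longrightarrow> w i \<le> 1"
    and sw: "(\<Sum>i<n. w i) = real k" and k1: "1 \<le> k" and kn: "k \<le> n"
  shows "(\<Sum>i<n. lam i * w i) \<le> (\<Sum>i<k. lam i)"
proof -
  define c where "c = lam (k - 1)"
  have split: "sum f {..<n} = sum f {..<k} + sum f {k..<n}" for f :: "nat \<Rightarrow> real"
    using kn by (metis atLeast0LessThan sum.atLeastLessThan_concat zero_le)
  have a: "lam i * w i \<le> lam i - c * (1 - w i)" if i: "i < k" for i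
  proof -
    have "c \<le> lam i" unfolding c_def using mono[of i "k - 1"] i kn by auto
    moreover have "0 \<le> 1 - w i" using w1[of i] i kn by auto
    ultimately have "c * (1 - w i) \<le> lam i * (1 - w i)" by (rule mult_right_mono)
    thus ?thesis by (simp add: algebra_simps)
  qed
  have b: "lam i * w i \<le> c * w i" if i: "i \<in> {k..<n}" for i
  proof -
    have "lam i \<le> c" unfolding c_def using mono[of "k - 1" i] i k1 by auto
    thus ?thesis using w0[of i] i by (auto intro: mult_right_mono)
  qed
  have "(\<Sum>i<n. lam i * w i) = (\<Sum>i<k. lam i * w i) + (\<Sum>i\<in>{k..<n}. lam i * w i)" by (rule split)
  also have "\<dots> \<le> (\<Sum>i<k. lam i - c * (1 - w i)) + (\<Sum>i\<in>{k..<n}. c * w i)"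
    by (intro add_mono sum_mono a b, auto)
  also have "\<dots> = (\<Sum>i<k. lam i) - c * (real k - ((\<Sum>i<k. w i) + (\<Sum>i\<in>{k..<n}. w i)))"
    by (simp add: sum_subtractf sum_distrib_left algebra_simps sum.distrib)
  also have "(\<Sum>i<k. w i) + (\<Sum>i\<in>{k..<n}. w i) = real k" using split[of w] sw by simp
  finally show ?thesis by simp
qed

definition T :: "nat \<Rightarrow> nat \<Rightarrow> real mat \<Rightarrow> real mat \<Rightarrow> real" where
  "T k n U X = (\<Sum>j<k. \<Sum>a<n. \<Sum>b<n. U $$ (j,a) * X $$ (a,b) * U $$ (j,b))"

lemma quad_entry:
  assumes U: "U \<in> carrier_mat k n" and X: "X \<in> carrier_mat n n" and j: "j < k"
  shows "(\<Sum>a<n. \<Sum>b<n. U $$ (j,a) * X $$ (a,b) * U $$ (j,b)) = (U * X * transpose_mat U) $$ (j,j)"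
proof -
  have "(U * X * transpose_mat U) $$ (j,j) = row (U * X) j \<bullet> col (transpose_mat U) j"
    by (rule index_mult_mat(1), insert U X j, auto)
  also have "\<dots> = (\<Sum>b<n. (\<Sum>a<n. U $$ (j,a) * X $$ (a,b)) * U $$ (j,b))"
    using U X j by (simp add: scalar_prod_def lessThan_atLeast0)
  also have "\<dots> = (\<Sum>b<n. \<Sum>a<n. U $$ (j,a) * X $$ (a,b) * U $$ (j,b))"
    by (simp add: sum_distrib_right)
  also have "\<dots> = (\<Sum>a<n. \<Sum>b<n. U $$ (j,a) * X $$ (a,b) * U $$ (j,b))" by (rule sum.swap)
  finally show ?thesis by simp
qed

lemma T_trace:
  assumes U: "U \<in> carrier_mat k n" and X: "X \<in> carrier_mat n n"
  shows "T k n U X = (\<Sum>j<k. (U * X * transpose_mat U) $$ (j,j))"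
  unfolding T_def
proof (rule sum.cong[OF refl])
  fix j assume "j \<in> {..<k}" hence j: "j < k" by auto
  have e1: "(U * X) $$ (j,b) = (\<Sum>a<n. U $$ (j,a) * X $$ (a,b))" if b: "b < n" for b
    using U X j b by (auto simp: scalar_prod_def lessThan_atLeast0 intro!: sum.cong)
  have "(U * X * transpose_mat U) $$ (j,j) = row (U * X) j \<bullet> col (transpose_mat U) j"
    by (rule index_mult_mat(1), insert U X j, auto)
  also have "\<dots> = (\<Sum>b<n. (\<Sum>a<n. U $$ (j,a) * X $$ (a,b)) * U $$ (j,b))"
    using U X j by (simp add: scalar_prod_def lessThan_atLeast0)
  also have "\<dots> = (\<Sum>b<n. \<Sum>a<n. U $$ (j,a) * X $$ (a,b) * U $$ (j,b))"
    by (simp add: sum_distrib_right)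
  also have "\<dots> = (\<Sum>a<n. \<Sum>b<n. U $$ (j,a) * X $$ (a,b) * U $$ (j,b))" by (rule sum.swap)
  finally show "(\<Sum>a<n. \<Sum>b<n. U $$ (j,a) * X $$ (a,b) * U $$ (j,b)) = (U * X * transpose_mat U) $$ (j,j)" by simp
qed

lemma diag_quad:
  assumes V: "V \<in> carrier_mat k n" and len: "length lam = n" and j: "j < k"
  shows "(V * dmat lam * transpose_mat V) $$ (j,j) = (\<Sum>l<n. (V $$ (j,l))^2 * lam ! l)"
proof -
  have VD: "(V * dmat lam) $$ (j,l) = V $$ (j,l) * lam ! l" if l: "l < n" for l
  proof -
    have "(V * dmat lam) $$ (j,l) = (\<Sum>i<n. V $$ (j,i) * (if i = l then lam ! i else 0))"
      using V j l len by (auto simp: dmat_def scalar_prod_def lessThan_atLeast0 intro!: sum.cong)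
    also have "\<dots> = (\<Sum>i<n. if i = l then V $$ (j,i) * lam ! i else 0)"
      by (intro sum.cong refl, auto)
    also have "\<dots> = V $$ (j,l) * lam ! l" using l by simp
    finally show ?thesis .
  qed
  have "(V * dmat lam * transpose_mat V) $$ (j,j) = (\<Sum>l<n. (V * dmat lam) $$ (j,l) * V $$ (j,l))"
    using V j len by (auto simp: dmat_def scalar_prod_def lessThan_atLeast0 intro!: sum.cong)
  also have "\<dots> = (\<Sum>l<n. (V $$ (j,l))^2 * lam ! l)"
    by (intro sum.cong refl, simp add: VD power2_eq_square)
  finally show ?thesis .
qed

lemma row_norm:
  fixes U :: "real mat"
  assumes U: "U \<in> carrier_mat k n" and UU: "U * transpose_mat U = 1\<^sub>m k" and j: "j < k"
  shows "(\<Sum>a<n. (U $$ (j,a))^2) = 1"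
proof -
  have "(U * transpose_mat U) $$ (j,j) = (\<Sum>a<n. (U $$ (j,a))^2)"
    using U j by (auto simp: scalar_prod_def lessThan_atLeast0 power2_eq_square intro!: sum.cong)
  thus ?thesis unfolding UU using j by simp
qed

lemma kyfan_le:
  fixes M U :: "real mat"
  assumes M: "M \<in> carrier_mat n n" and sym: "transpose_mat M = M"
    and U: "U \<in> carrier_mat k n" and UU: "U * transpose_mat U = 1\<^sub>m k"
    and k1: "1 \<le> k" and kn: "k \<le> n"
  shows "T k n U M \<le> S k M"
proof -
  from spectral_desc[OF M sym] obtain P where P: "P \<in> carrier_mat n n"
    and PTP: "transpose_mat P * P = 1\<^sub>m n" and PMP: "transpose_mat P * M * P = dmat (eigenvalues_desc M)"
    and len: "length (eigenvalues_desc M) = n" and sorted: "sorted_wrt (\<ge>) (eigenvalues_desc M)" by blast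
  define lam where "lam = eigenvalues_desc M"
  define D where "D = dmat lam"
  have D: "D \<in> carrier_mat n n" unfolding D_def dmat_def lam_def len by simp
  have PT: "transpose_mat P \<in> carrier_mat n n" using P by simp
  have PPT: "P * transpose_mat P = 1\<^sub>m n" by (rule mat_mult_left_right_inverse[OF PT P PTP])
  have MD: "M = P * D * transpose_mat P"
  proof -
    have "P * D * transpose_mat P = (P * transpose_mat P) * M * (P * transpose_mat P)"
      unfolding D_def lam_def PMP[symmetric] using P M PT
      by (simp add: assoc_mult_mat[of _ n n _ n _ n])
    thus ?thesis unfolding PPT using M by simp
  qed
  define V where "V = U * P"
  have V: "V \<in> carrier_mat k n" unfolding V_def using U P by auto
  have VT: "transpose_mat V = transpose_mat P * transpose_mat U" unfolding V_def
    by (rule transpose_mult[OF U P])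
  have UT: "transpose_mat U \<in> carrier_mat n k" using U by simp
  have VV: "V * transpose_mat V = 1\<^sub>m k"
  proof -
    have "V * transpose_mat V = (U * P) * (transpose_mat P * transpose_mat U)"
      unfolding VT unfolding V_def ..
    also have "\<dots> = U * (P * (transpose_mat P * transpose_mat U))"
      by (rule assoc_mult_mat[OF U P], insert PT UT, auto)
    also have "P * (transpose_mat P * transpose_mat U) = (P * transpose_mat P) * transpose_mat U"
      by (rule assoc_mult_mat[OF P PT UT, symmetric])
    also have "\<dots> = transpose_mat U" unfolding PPT using UT by simp
    finally show ?thesis using UU by simp
  qed
  have UMU: "U * M * transpose_mat U = V * D * transpose_mat V"
  proof -
    have PD: "P * D \<in> carrier_mat n n" using P D by auto
    have PDP: "P * D * transpose_mat P \<in> carrier_mat n n" using P D by auto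
    have PTUT: "transpose_mat P * transpose_mat U \<in> carrier_mat n k" using PT UT by auto
    have e1: "(P * D * transpose_mat P) * transpose_mat U = (P * D) * (transpose_mat P * transpose_mat U)"
      by (rule assoc_mult_mat[OF PD PT UT])
    have e2: "(P * D) * (transpose_mat P * transpose_mat U) = P * (D * (transpose_mat P * transpose_mat U))"
      by (rule assoc_mult_mat[OF P D PTUT])
    have e3: "(U * P) * D * (transpose_mat P * transpose_mat U) = (U * P) * (D * (transpose_mat P * transpose_mat U))"
      by (rule assoc_mult_mat[OF _ D PTUT], insert U P, auto)
    have e4: "(U * P) * (D * (transpose_mat P * transpose_mat U)) = U * (P * (D * (transpose_mat P * transpose_mat U)))"
      by (rule assoc_mult_mat[OF U P], insert D PTUT, auto)
    have "U * (P * D * transpose_mat P) * transpose_mat U = U * ((P * D * transpose_mat P) * transpose_mat U)"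
      by (rule assoc_mult_mat[OF U PDP UT])
    also have "\<dots> = (U * P) * D * (transpose_mat P * transpose_mat U)"
      unfolding e1 e2 e3 e4 ..
    finally show ?thesis unfolding MD VT unfolding V_def .
  qed
  define w where "w l = (\<Sum>j<k. (V $$ (j,l))^2)" for l
  have TU: "T k n U M = (\<Sum>l<n. lam ! l * w l)"
  proof -
    have "T k n U M = (\<Sum>j<k. \<Sum>l<n. (V $$ (j,l))^2 * lam ! l)"
      unfolding T_trace[OF U M] UMU D_def
      by (intro sum.cong refl, rule diag_quad[OF V], auto simp: lam_def len)
    also have "\<dots> = (\<Sum>l<n. \<Sum>j<k. (V $$ (j,l))^2 * lam ! l)" by (rule sum.swap)
    also have "\<dots> = (\<Sum>l<n. lam ! l * w l)" unfolding w_def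
      by (simp add: sum_distrib_left sum_distrib_right mult.commute)
    finally show ?thesis .
  qed
  have w0: "0 \<le> w l" for l unfolding w_def by (intro sum_nonneg, auto)
  have sw: "(\<Sum>l<n. w l) = real k"
  proof -
    have "(\<Sum>l<n. w l) = (\<Sum>j<k. \<Sum>l<n. (V $$ (j,l))^2)" unfolding w_def by (rule sum.swap)
    also have "\<dots> = (\<Sum>j<k. 1)" by (intro sum.cong refl row_norm[OF V VV], auto)
    finally show ?thesis by simp
  qed
  define X where "X = transpose_mat V * V"
  have X: "X \<in> carrier_mat n n" unfolding X_def using V by auto
  have XX: "X * X = X"
  proof -
    have VTc: "transpose_mat V \<in> carrier_mat n k" using V by simp
    have "X * X = transpose_mat V * (V * (transpose_mat V * V))" unfolding X_def
      by (rule assoc_mult_mat[OF VTc V], insert V, auto)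
    also have "V * (transpose_mat V * V) = (V * transpose_mat V) * V"
      by (rule assoc_mult_mat[OF V VTc V, symmetric])
    finally show ?thesis unfolding VV X_def using V by simp
  qed
  have Xw: "X $$ (l,l) = w l" if l: "l < n" for l
    unfolding X_def w_def using V l by (auto simp: scalar_prod_def lessThan_atLeast0 power2_eq_square intro!: sum.cong)
  have XT: "X $$ (a,b) = X $$ (b,a)" if "a < n" "b < n" for a b
    unfolding X_def using V that by (auto simp: scalar_prod_def mult.commute intro!: sum.cong)
  have w1: "w l \<le> 1" if l: "l < n" for l
  proof -
    have "w l = (X * X) $$ (l,l)" unfolding XX Xw[OF l] ..
    also have "\<dots> = (\<Sum>i<n. (X $$ (l,i))^2)"
      using X l XT[OF l] by (auto simp: scalar_prod_def lessThan_atLeast0 power2_eq_square intro!: sum.cong)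
    also have "\<dots> \<ge> (X $$ (l,l))^2" by (rule member_le_sum, insert l, auto)
    finally have "(w l)^2 \<le> w l" unfolding Xw[OF l] .
    show ?thesis
    proof (rule ccontr)
      assume "\<not> w l \<le> 1" hence w1: "1 < w l" by simp
      hence "w l * 1 < w l * w l" by (intro mult_strict_left_mono, auto)
      with \<open>(w l)^2 \<le> w l\<close> show False by (simp add: power2_eq_square)
    qed
  qed
  have mono: "lam ! j \<le> lam ! i" if "i \<le> j" "j < n" for i j
  proof (cases "i = j")
    case False
    hence "i < j" using that by simp
    from sorted_wrt_nth_less[OF sorted this] that len show ?thesis unfolding lam_def by simp
  qed simp
  have "T k n U M \<le> (\<Sum>i<k. lam ! i)" unfolding TU
    using rearr[of n "\<lambda>i. lam ! i" w k] mono w0 w1 sw k1 kn by (simp add: mult.commute)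
  also have "(\<Sum>i<k. lam ! i) = S k M" unfolding S_def sum_list_sum_nth lam_def
    using kn len by (auto simp: lessThan_atLeast0 min_def intro!: sum.cong)
  finally show ?thesis .
qed

lemma kyfan_eq:
  fixes M :: "real mat"
  assumes M: "M \<in> carrier_mat n n" and sym: "transpose_mat M = M" and kn: "k \<le> n"
  shows "\<exists>U. U \<in> carrier_mat k n \<and> U * transpose_mat U = 1\<^sub>m k \<and> T k n U M = S k M"
proof -
  from spectral_desc[OF M sym] obtain P where P: "P \<in> carrier_mat n n"
    and PTP: "transpose_mat P * P = 1\<^sub>m n" and PMP: "transpose_mat P * M * P = dmat (eigenvalues_desc M)"
    and len: "length (eigenvalues_desc M) = n" by blast
  define U where "U = mat k n (\<lambda>(j,i). P $$ (i,j))"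
  have U: "U \<in> carrier_mat k n" unfolding U_def by simp
  have PT: "transpose_mat P \<in> carrier_mat n n" using P by simp
  have UU: "U * transpose_mat U = 1\<^sub>m k"
  proof (rule eq_matI)
    fix j l assume "j < dim_row (1\<^sub>m k)" "l < dim_col (1\<^sub>m k)"
    hence j: "j < k" and l: "l < k" by auto
    have "(U * transpose_mat U) $$ (j,l) = (transpose_mat P * P) $$ (j,l)"
      using j l kn P U unfolding U_def by (auto simp: scalar_prod_def intro!: sum.cong)
    thus "(U * transpose_mat U) $$ (j,l) = 1\<^sub>m k $$ (j,l)" unfolding PTP using j l kn by simp
  qed (insert U, auto)
  have "T k n U M = (\<Sum>j<k. (transpose_mat P * M * transpose_mat (transpose_mat P)) $$ (j,j))"
    unfolding T_def
  proof (rule sum.cong[OF refl])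
    fix j assume "j \<in> {..<k}" hence j: "j < k" by simp
    have "(\<Sum>a<n. \<Sum>b<n. U $$ (j,a) * M $$ (a,b) * U $$ (j,b))
       = (\<Sum>a<n. \<Sum>b<n. transpose_mat P $$ (j,a) * M $$ (a,b) * transpose_mat P $$ (j,b))"
      using j kn P unfolding U_def by (auto intro!: sum.cong)
    also have "\<dots> = (transpose_mat P * M * transpose_mat (transpose_mat P)) $$ (j,j)"
      by (rule quad_entry[OF PT M], insert j kn, auto)
    finally show "(\<Sum>a<n. \<Sum>b<n. U $$ (j,a) * M $$ (a,b) * U $$ (j,b))
       = (transpose_mat P * M * transpose_mat (transpose_mat P)) $$ (j,j)" .
  qed
  also have "\<dots> = (\<Sum>j<k. eigenvalues_desc M ! j)" unfolding transpose_transpose PMP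
    using kn len by (auto simp: dmat_def intro!: sum.cong)
  also have "\<dots> = S k M" unfolding S_def sum_list_sum_nth
    using kn len by (auto simp: lessThan_atLeast0 min_def intro!: sum.cong)
  finally show ?thesis using U UU by blast
qed

lemma T_lin:
  assumes "\<And>a b. a < n \<Longrightarrow> b < n \<Longrightarrow> X $$ (a,b) = p * Y $$ (a,b) + q * Z $$ (a,b)"
  shows "T k n U X = p * T k n U Y + q * T k n U Z"
proof -
  have "T k n U X = (\<Sum>j<k. \<Sum>a<n. \<Sum>b<n. p * (U $$ (j,a) * Y $$ (a,b) * U $$ (j,b))
      + q * (U $$ (j,a) * Z $$ (a,b) * U $$ (j,b)))"
    unfolding T_def by (intro sum.cong refl, simp add: assms algebra_simps)
  thus ?thesis unfolding T_def by (simp add: sum.distrib sum_distrib_left)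
qed

lemma T_diag:
  assumes "\<And>a b. a < n \<Longrightarrow> b < n \<Longrightarrow> X $$ (a,b) = (if a = b then g a else 0)"
  shows "T k n U X = (\<Sum>j<k. \<Sum>a<n. (U $$ (j,a))^2 * g a)"
  unfolding T_def
proof (intro sum.cong refl)
  fix j a assume a: "a \<in> {..<n}"
  have "(\<Sum>b<n. U $$ (j,a) * X $$ (a,b) * U $$ (j,b)) = (\<Sum>b<n. if b = a then U $$ (j,a) * g a * U $$ (j,a) else 0)"
    using a by (intro sum.cong refl, auto simp: assms)
  also have "\<dots> = (U $$ (j,a))^2 * g a" using a by (simp add: power2_eq_square)
  finally show "(\<Sum>b<n. U $$ (j,a) * X $$ (a,b) * U $$ (j,b)) = (U $$ (j,a))^2 * g a" .
qed

lemma T_diag_le: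
  fixes U :: "real mat"
  assumes U: "U \<in> carrier_mat k n" and UU: "U * transpose_mat U = 1\<^sub>m k"
    and X: "\<And>a b. a < n \<Longrightarrow> b < n \<Longrightarrow> X $$ (a,b) = (if a = b then g a else 0)"
    and g: "\<And>a. a < n \<Longrightarrow> g a \<le> c"
  shows "T k n U X \<le> real k * c"
proof -
  have "T k n U X = (\<Sum>j<k. \<Sum>a<n. (U $$ (j,a))^2 * g a)" by (rule T_diag, rule X)
  also have "\<dots> \<le> (\<Sum>j<k. \<Sum>a<n. (U $$ (j,a))^2 * c)"
    by (intro sum_mono mult_left_mono g, auto)
  also have "\<dots> = (\<Sum>j<k. c)" 
    by (intro sum.cong refl, simp add: sum_distrib_right[symmetric] row_norm[OF U UU])
  finally show ?thesis by simp
qed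

lemma T_diag_eq:
  fixes U :: "real mat"
  assumes U: "U \<in> carrier_mat k n" and UU: "U * transpose_mat U = 1\<^sub>m k"
    and X: "\<And>a b. a < n \<Longrightarrow> b < n \<Longrightarrow> X $$ (a,b) = (if a = b then c else 0)"
  shows "T k n U X = real k * c"
proof -
  have "T k n U X = (\<Sum>j<k. \<Sum>a<n. (U $$ (j,a))^2 * c)" by (rule T_diag, rule X)
  also have "\<dots> = (\<Sum>j<k. c)" 
    by (intro sum.cong refl, simp add: sum_distrib_right[symmetric] row_norm[OF U UU])
  finally show ?thesis by simp
qed

lemma shift_S:
  fixes X Y :: "real mat"
  assumes X: "X \<in> carrier_mat n n" and XT: "transpose_mat X = X"
    and Y: "Y \<in> carrier_mat n n" and YT: "transpose_mat Y = Y"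
    and d: "0 \<le> d" and k1: "1 \<le> k" and kn: "k \<le> n"
    and XY: "\<And>a b. a < n \<Longrightarrow> b < n \<Longrightarrow> X $$ (a,b) = c * (if a = b then 1 else 0) + d * Y $$ (a,b)"
  shows "S k X = real k * c + d * S k Y"
proof -
  have TX: "T k n U X = real k * c + d * T k n U Y"
    if U: "U \<in> carrier_mat k n" and UU: "U * transpose_mat U = 1\<^sub>m k" for U
  proof -
    have "T k n U X = c * T k n U (1\<^sub>m n) + d * T k n U Y"
      by (rule T_lin, simp add: XY)
    also have "T k n U (1\<^sub>m n) = real k * 1" by (rule T_diag_eq[OF U UU], auto)
    finally show ?thesis by simp
  qed
  from kyfan_eq[OF X XT kn] obtain U where U: "U \<in> carrier_mat k n"
    and UU: "U * transpose_mat U = 1\<^sub>m k" and SX: "T k n U X = S k X" by blast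
  have "S k X \<le> real k * c + d * S k Y"
    unfolding SX[symmetric] TX[OF U UU]
    using mult_left_mono[OF kyfan_le[OF Y YT U UU k1 kn] d] by simp
  moreover
  from kyfan_eq[OF Y YT kn] obtain V where V: "V \<in> carrier_mat k n"
    and VV: "V * transpose_mat V = 1\<^sub>m k" and SY: "T k n V Y = S k Y" by blast
  have "real k * c + d * S k Y \<le> S k X"
    using kyfan_le[OF X XT V VV k1 kn] unfolding TX[OF V VV] SY .
  ultimately show ?thesis by simp
qed

theorem theorem5p1:
  fixes n k :: nat and E :: "nat \<Rightarrow> nat \<Rightarrow> bool" and \<alpha> :: real
  assumes "simple_graph n E" and "1 \<le> k" and "k \<le> n"
  shows "(0 \<le> \<alpha> \<and> \<alpha> \<le> 1/2 \<longrightarrow>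
            S k (A_alpha \<alpha> n E) \<ge> (1 - \<alpha>) * S k (signless_laplacian n E)
                                    + (2*\<alpha> - 1) * real k * real (max_degree n E))
       \<and> (1/2 \<le> \<alpha> \<and> \<alpha> \<le> 1 \<longrightarrow>
            S k (A_alpha \<alpha> n E) \<ge> \<alpha> * S k (signless_laplacian n E)
                                    + (1 - 2*\<alpha>) * S k (adj_mat n E))
       \<and> (regular n E \<longrightarrow>
            (0 \<le> \<alpha> \<and> \<alpha> \<le> 1/2 \<longrightarrow>
               S k (A_alpha \<alpha> n E) = (1 - \<alpha>) * S k (signless_laplacian n E)
                                    + (2*\<alpha> - 1) * real k * real (max_degree n E))
          \<and> (1/2 \<le> \<alpha> \<and> \<alpha> \<le> 1 \<longrightarrow>
               S k (A_alpha \<alpha> n E) = \<alpha> * S k (signless_laplacian n E)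
                                    + (1 - 2*\<alpha>) * S k (adj_mat n E)))"
proof -
  note G = assms(1) and k1 = assms(2) and kn = assms(3)
  define Ad where "Ad = adj_mat n E"
  define Dg where "Dg = deg_mat n E"
  define Q where "Q = signless_laplacian n E"
  define Aa where "Aa = A_alpha \<alpha> n E"
  define \<Delta> where "\<Delta> = real (max_degree n E)"
  have Ad: "Ad \<in> carrier_mat n n" unfolding Ad_def adj_mat_def by simp
  have Dg: "Dg \<in> carrier_mat n n" unfolding Dg_def deg_mat_def by simp
  have Q: "Q \<in> carrier_mat n n" unfolding Q_def signless_laplacian_def using Ad Dg
    unfolding Ad_def Dg_def by simp
  have Aa: "Aa \<in> carrier_mat n n" unfolding Aa_def A_alpha_def using Ad Dg
    unfolding Ad_def Dg_def by simp
  have Ade: "Ad $$ (a,b) = (if E a b then 1 else 0)" if "a < n" "b < n" for a b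
    unfolding Ad_def adj_mat_def using that by simp
  have Dge: "Dg $$ (a,b) = (if a = b then real (degree n E a) else 0)" if "a < n" "b < n" for a b
    unfolding Dg_def deg_mat_def using that by simp
  have Qe: "Q $$ (a,b) = Dg $$ (a,b) + Ad $$ (a,b)" if "a < n" "b < n" for a b
    unfolding Q_def signless_laplacian_def Dg_def Ad_def using that
    by (simp add: deg_mat_def adj_mat_def)
  have Aae: "Aa $$ (a,b) = \<alpha> * Dg $$ (a,b) + (1 - \<alpha>) * Ad $$ (a,b)" if "a < n" "b < n" for a b
    unfolding Aa_def A_alpha_def Dg_def Ad_def using that
    by (simp add: deg_mat_def adj_mat_def)
  have Esym: "E a b = E b a" if "a < n" "b < n" for a b
    using G that unfolding simple_graph_def by blast
  have AdT: "transpose_mat Ad = Ad"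
    by (rule eq_matI, insert Ad, auto simp: Ade Esym)
  have DgT: "transpose_mat Dg = Dg"
    by (rule eq_matI, insert Dg, auto simp: Dge)
  have QT: "transpose_mat Q = Q"
    by (rule eq_matI, insert Q, auto simp: Qe Ade Dge Esym)
  have AaT: "transpose_mat Aa = Aa"
    by (rule eq_matI, insert Aa, auto simp: Aae Ade Dge Esym)
  have degD: "real (degree n E a) \<le> \<Delta>" if "a < n" for a
    unfolding \<Delta>_def max_degree_def using that by auto
  from kyfan_eq[OF Q QT kn] obtain U where U: "U \<in> carrier_mat k n"
    and UU: "U * transpose_mat U = 1\<^sub>m k" and SQ: "T k n U Q = S k Q" by blast
  have part1: "S k Aa \<ge> (1 - \<alpha>) * S k Q + (2*\<alpha> - 1) * real k * \<Delta>"
    if a: "0 \<le> \<alpha>" "\<alpha> \<le> 1/2"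
  proof -
    have "T k n U Aa = (1 - \<alpha>) * T k n U Q + (2*\<alpha> - 1) * T k n U Dg"
      by (rule T_lin, simp add: Aae Qe algebra_simps)
    moreover have "T k n U Dg \<le> real k * \<Delta>"
      by (rule T_diag_le[OF U UU], rule Dge, auto intro: degD)
    moreover have "T k n U Aa \<le> S k Aa" by (rule kyfan_le[OF Aa AaT U UU k1 kn])
    moreover have "2*\<alpha> - 1 \<le> 0" using a by simp
    ultimately have "(1 - \<alpha>) * T k n U Q + (2*\<alpha> - 1) * (real k * \<Delta>) \<le> S k Aa"
      by (smt (verit) mult_left_mono_neg)
    thus ?thesis unfolding SQ by (simp add: algebra_simps)
  qed
  have part2: "S k Aa \<ge> \<alpha> * S k Q + (1 - 2*\<alpha>) * S k Ad"
    if a: "1/2 \<le> \<alpha>" "\<alpha> \<le> 1"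
  proof -
    have "T k n U Aa = \<alpha> * T k n U Q + (1 - 2*\<alpha>) * T k n U Ad"
      by (rule T_lin, simp add: Aae Qe algebra_simps)
    moreover have "T k n U Ad \<le> S k Ad" by (rule kyfan_le[OF Ad AdT U UU k1 kn])
    moreover have "T k n U Aa \<le> S k Aa" by (rule kyfan_le[OF Aa AaT U UU k1 kn])
    moreover have "1 - 2*\<alpha> \<le> 0" using a by simp
    ultimately show ?thesis unfolding SQ
      by (smt (verit) mult_left_mono_neg)
  qed
  have part3: "S k Aa = (1 - \<alpha>) * S k Q + (2*\<alpha> - 1) * real k * \<Delta>
      \<and> (S k Aa = \<alpha> * S k Q + (1 - 2*\<alpha>) * S k Ad)"
    if reg: "regular n E" and a: "0 \<le> \<alpha>" "\<alpha> \<le> 1"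
  proof -
    from reg obtain r where r: "\<And>i. i < n \<Longrightarrow> degree n E i = r" unfolding regular_def by blast
    have n0: "0 < n" using k1 kn by simp
    have "degree n E ` {..<n} = {r}" using r n0 by force
    hence Dr: "\<Delta> = real r" unfolding \<Delta>_def max_degree_def by simp
    have SAa: "S k Aa = real k * (\<alpha> * real r) + (1 - \<alpha>) * S k Ad"
      by (rule shift_S[OF Aa AaT Ad AdT _ k1 kn], insert a, auto simp: Aae Dge r)
    have SQ': "S k Q = real k * real r + 1 * S k Ad"
      by (rule shift_S[OF Q QT Ad AdT _ k1 kn], auto simp: Qe Dge r)
    show ?thesis unfolding SAa SQ' Dr by (simp add: algebra_simps)
  qed
  show ?thesis
    using part1 part2 part3 unfolding Aa_def Q_def Ad_def \<Delta>_def by auto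
qed

end
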